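(* Let $C$ be a convex curve in $\mathbb{R}^2$, and let $\alpha\colon I\to C$ be a differentiable curve moving in the counterclockwise direction about $C$. For each $t$, the line through $\alpha(t)$ and the center of curvature $x_\alpha(t)$ intersects $C$ at a unique point of $C\setminus\{\alpha(t)\}$, denoted $\beta(t)=h(\alpha(t))$. Then $\alpha$ and $\beta$ have matching orientations at time $t$ if and only if $x_\alpha(t)\in\mathrm{conv}(C)$.
   Context: $I=[0,1]$; $\mathrm{conv}(C)$ is the convex hull of $C$. For a differentiable curve $\alpha$: unit tangent $T=\alpha'/\|\alpha'\|$, inner unit normal $n(\alpha(t))=T'/\|T'\|$, curvature $\kappa(t)=\|T'(t)\|/\|\alpha'(t)\|$, center of curvature $x_\alpha(t)=\alpha(t)+\frac{1}{\kappa(t)}n(\alpha(t))$. The map $h\colon C\to C$ sends $p$ to the unique point of intersection of the normal line to $C$ at $p$ with $C\setminus\{p\}$. Curves $\alpha,\beta\colon I\to C$ have matching orientations at time $t$ if the bases $(\beta'(t),n(\beta(t)))$ and $(\alpha'(t),n(\alpha(t)))$ of $\mathbb{R}^2$ have determinants of the same sign. *)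

theory Defs
  imports "HOL-Analysis.Analysis"
begin

definition Iv :: "real set" where "Iv = {0..1}"

definition det2 :: "real^2 \<Rightarrow> real^2 \<Rightarrow> real" where
  "det2 u v = u$1 * v$2 - u$2 * v$1"

text \<open>A convex curve: the boundary of a compact convex set with nonempty interior
  (so that conv C is that set).\<close>
definition convex_curve :: "(real^2) set \<Rightarrow> bool" where
  "convex_curve C \<longleftrightarrow> (\<exists>K. compact K \<and> convex K \<and> interior K \<noteq> {} \<and> C = frontier K)"

definition is_inner_normal :: "(real^2) set \<Rightarrow> real^2 \<Rightarrow> real^2 \<Rightarrow> bool" where
  "is_inner_normal C p u \<longleftrightarrow> norm u = 1 \<and> (\<forall>x\<in>convex hull C. 0 \<le> (x - p) \<bullet> u)"

text \<open>A smooth (C^1) convex curve: a convex curve with a unique supporting line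
  (unique inner unit normal) at each of its points.\<close>
definition smooth_convex_curve :: "(real^2) set \<Rightarrow> bool" where
  "smooth_convex_curve C \<longleftrightarrow> convex_curve C \<and> (\<forall>p\<in>C. \<exists>!u. is_inner_normal C p u)"

definition inner_normal :: "(real^2) set \<Rightarrow> real^2 \<Rightarrow> real^2" where
  "inner_normal C p = (THE u. is_inner_normal C p u)"

definition hmap :: "(real^2) set \<Rightarrow> real^2 \<Rightarrow> real^2" where
  "hmap C p = (THE q. q \<in> C \<and> q \<noteq> p \<and> (\<exists>s::real. q = p + s *\<^sub>R inner_normal C p))"

definition dcurve :: "(real \<Rightarrow> real^2) \<Rightarrow> real \<Rightarrow> real^2" where
  "dcurve a t = vector_derivative a (at t within Iv)"

definition unit_tangent :: "(real \<Rightarrow> real^2) \<Rightarrow> real \<Rightarrow> real^2" where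
  "unit_tangent a t = (1 / norm (dcurve a t)) *\<^sub>R dcurve a t"

definition curve_normal :: "(real \<Rightarrow> real^2) \<Rightarrow> real \<Rightarrow> real^2" where
  "curve_normal a t = (1 / norm (dcurve (unit_tangent a) t)) *\<^sub>R dcurve (unit_tangent a) t"

definition curvature :: "(real \<Rightarrow> real^2) \<Rightarrow> real \<Rightarrow> real" where
  "curvature a t = norm (dcurve (unit_tangent a) t) / norm (dcurve a t)"

definition center_curv :: "(real \<Rightarrow> real^2) \<Rightarrow> real \<Rightarrow> real^2" where
  "center_curv a t = a t + (1 / curvature a t) *\<^sub>R curve_normal a t"

text \<open>Counterclockwise motion about C: the polar angle of a(t) around every interior
  point c of conv C is strictly increasing, i.e. det(a'(t), c - a(t)) > 0.\<close>
definition counterclockwise :: "(real^2) set \<Rightarrow> (real \<Rightarrow> real^2) \<Rightarrow> bool" where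
  "counterclockwise C a \<longleftrightarrow>
     (\<forall>s\<in>Iv. \<forall>c\<in>interior (convex hull C). det2 (dcurve a s) (c - a s) > 0)"

definition line_through :: "real^2 \<Rightarrow> real^2 \<Rightarrow> (real^2) set" where
  "line_through a b = {a + s *\<^sub>R (b - a) | s. True}"

definition matching_orient ::
  "(real^2) set \<Rightarrow> (real \<Rightarrow> real^2) \<Rightarrow> (real \<Rightarrow> real^2) \<Rightarrow> real \<Rightarrow> bool" where
  "matching_orient C a b t \<longleftrightarrow>
     sgn (det2 (dcurve b t) (inner_normal C (b t))) = sgn (det2 (dcurve a t) (curve_normal a t))"

end

theory Submission
  imports Defs
begin

lemma inner2: "(x::real^2) \<bullet> y = x$1 * y$1 + x$2 * y$2"
  by (simp add: inner_vec_def sum_2)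

lemma vec2_eq: "((x::real^2) = y) \<longleftrightarrow> x$1 = y$1 \<and> x$2 = y$2"
  by (simp add: vec_eq_iff forall_2)

lemma norm2_sq: "(norm (x::real^2))^2 = x$1 * x$1 + x$2 * x$2"
  by (simp add: power2_norm_eq_inner inner2)

lemma diffquot:
  fixes f :: "real \<Rightarrow> 'a::real_normed_vector"
  assumes "(f has_vector_derivative D) (at x within S)"
  shows "((\<lambda>y. (1 / (y - x)) *\<^sub>R (f y - f x)) \<longlongrightarrow> D) (at x within S)"
proof -
  from assms have "((\<lambda>y. (1 / norm(y - x)) *\<^sub>R (f y - (f x + (y - x) *\<^sub>R D))) \<longlongrightarrow> 0) (at x within S)"
    unfolding has_vector_derivative_def has_derivative_within by blast
  hence "((\<lambda>y. norm ((1 / norm(y - x)) *\<^sub>R (f y - (f x + (y - x) *\<^sub>R D)))) \<longlongrightarrow> 0) (at x within S)"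
    by (rule tendsto_norm_zero)
  hence "((\<lambda>y. norm ((1 / (y - x)) *\<^sub>R (f y - f x) - D)) \<longlongrightarrow> 0) (at x within S)"
  proof (rule Lim_transform_eventually)
    show "\<forall>\<^sub>F y in at x within S. norm ((1 / norm(y - x)) *\<^sub>R (f y - (f x + (y - x) *\<^sub>R D))) = norm ((1 / (y - x)) *\<^sub>R (f y - f x) - D)"
      unfolding eventually_at_filter
    proof (rule always_eventually, intro allI impI)
      fix y assume "y \<noteq> x"
      hence "(1 / (y - x)) *\<^sub>R (f y - f x) - D = (1 / (y - x)) *\<^sub>R (f y - (f x + (y - x) *\<^sub>R D))"
      proof -
        have e: "(1 / (y - x)) *\<^sub>R ((y - x) *\<^sub>R D) = D" using \<open>y \<noteq> x\<close> by simp
        have "(1 / (y - x)) *\<^sub>R (f y - (f x + (y - x) *\<^sub>R D)) = (1 / (y - x)) *\<^sub>R (f y - f x) - (1 / (y - x)) *\<^sub>R ((y - x) *\<^sub>R D)"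
          by (simp only: scaleR_diff_right scaleR_add_right diff_diff_eq)
        thus ?thesis using e by simp
      qed
      thus "norm ((1 / norm(y - x)) *\<^sub>R (f y - (f x + (y - x) *\<^sub>R D))) = norm ((1 / (y - x)) *\<^sub>R (f y - f x) - D)"
        by simp
    qed
  qed
  thus ?thesis by (simp add: tendsto_norm_zero_iff LIM_zero_iff)
qed

lemma dq_inner:
  fixes f g :: "real \<Rightarrow> 'a::real_inner"
  assumes "(f has_vector_derivative D) (at x within S)" "(g has_vector_derivative E) (at x within S)"
  shows "((\<lambda>y. ((1 / (y - x)) *\<^sub>R (f y - f x)) \<bullet> ((1 / (y - x)) *\<^sub>R (g y - g x))) \<longlongrightarrow> D \<bullet> E) (at x within S)"
  by (intro tendsto_inner diffquot assms)

lemma Iv_nontriv: "t \<in> Iv \<Longrightarrow> at t within Iv \<noteq> bot"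
  unfolding Iv_def trivial_limit_within
  by simp

lemma scc_basic:
  assumes "smooth_convex_curve C"
  shows "compact (convex hull C)" "convex (convex hull C)" "interior (convex hull C) \<noteq> {}"
    "C = frontier (convex hull C)" "C \<subseteq> convex hull C" "closed (convex hull C)"
    "bounded (convex hull C)"
proof -
  obtain K where K: "compact K" "convex K" "interior K \<noteq> {}" "C = frontier K"
    using assms unfolding smooth_convex_curve_def convex_curve_def by blast
  have H: "convex hull C = K" using Krein_Milman_frontier[OF K(2,1)] K(4) by simp
  show "compact (convex hull C)" "convex (convex hull C)" "interior (convex hull C) \<noteq> {}"
    "C = frontier (convex hull C)" using H K by auto
  show "C \<subseteq> convex hull C" by (rule hull_subset)
  show "closed (convex hull C)" "bounded (convex hull C)" using H K compact_imp_closed compact_imp_bounded by auto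
qed

lemma normal_ex:
  assumes "smooth_convex_curve C" "p \<in> C"
  shows "is_inner_normal C p (inner_normal C p)"
  using assms unfolding smooth_convex_curve_def inner_normal_def by (metis theI')

lemma normal_uniq:
  assumes "smooth_convex_curve C" "p \<in> C" "is_inner_normal C p v"
  shows "v = inner_normal C p"
  using assms unfolding smooth_convex_curve_def inner_normal_def by (metis the1_equality)

lemma normal_prop:
  assumes "smooth_convex_curve C" "p \<in> C"
  shows "norm (inner_normal C p) = 1" "\<And>x. x \<in> convex hull C \<Longrightarrow> 0 \<le> (x - p) \<bullet> inner_normal C p"
  using normal_ex[OF assms] unfolding is_inner_normal_def by auto

lemma int_pos:
  assumes "is_inner_normal C p u" "c \<in> interior (convex hull C)"
  shows "(c - p) \<bullet> u > 0"
proof -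
  obtain e where e: "e > 0" "ball c e \<subseteq> convex hull C" using assms(2) by (meson mem_interior)
  have u1: "norm u = 1" "u \<bullet> u = 1" using assms(1) unfolding is_inner_normal_def
    by (auto simp: norm_eq_1)
  have "c - (e/2) *\<^sub>R u \<in> ball c e" using e u1 by (simp add: dist_norm)
  hence "0 \<le> (c - (e/2) *\<^sub>R u - p) \<bullet> u" using e assms(1) unfolding is_inner_normal_def by blast
  also have "\<dots> = (c - p) \<bullet> u - e/2" using u1 by (simp add: algebra_simps inner_diff_left)
  finally show ?thesis using e by simp
qed

lemma normal_cont:
  assumes "smooth_convex_curve C"
  shows "continuous_on C (inner_normal C)"
proof -
  let ?G = "{z::(real^2)\<times>(real^2). \<forall>x\<in>convex hull C. 0 \<le> (x - fst z) \<bullet> snd z}"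
  have cG: "closed ?G"
  proof -
    have "?G = (\<Inter>x\<in>convex hull C. {z. 0 \<le> (x - fst z) \<bullet> snd z})" by auto
    moreover have "closed {z::(real^2)\<times>(real^2). 0 \<le> (x - fst z) \<bullet> snd z}" for x
      by (intro closed_Collect_le continuous_intros)
    ultimately show ?thesis by auto
  qed
  have eq: "(\<lambda>x. Pair x (inner_normal C x)) ` C = (C \<times> sphere 0 1) \<inter> ?G"
  proof
    show "(\<lambda>x. Pair x (inner_normal C x)) ` C \<subseteq> (C \<times> sphere 0 1) \<inter> ?G"
      using normal_prop[OF assms] by auto
    show "(C \<times> sphere 0 1) \<inter> ?G \<subseteq> (\<lambda>x. Pair x (inner_normal C x)) ` C"
    proof
      fix z assume z: "z \<in> (C \<times> sphere 0 1) \<inter> ?G"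
      obtain p v where pv: "z = (p, v)" by fastforce
      have "is_inner_normal C p v" using z pv unfolding is_inner_normal_def by auto
      hence "v = inner_normal C p" using normal_uniq[OF assms] z pv by auto
      thus "z \<in> (\<lambda>x. Pair x (inner_normal C x)) ` C" using z pv by auto
    qed
  qed
  show ?thesis
  proof (subst continuous_closed_graph_eq[where T="sphere 0 1"])
    show "compact (sphere (0::real^2) 1)" by simp
    show "inner_normal C \<in> C \<rightarrow> sphere 0 1" using normal_prop[OF assms] by auto
    show "closedin (top_of_set (C \<times> sphere 0 1)) ((\<lambda>x. Pair x (inner_normal C x)) ` C)"
      unfolding eq using cG by (simp add: closedin_closed_Int)
  qed
qed

lemma comp_cont:
  assumes C: "smooth_convex_curve C" and t: "t \<in> Iv" and \<gamma>C: "\<forall>s\<in>Iv. \<gamma> s \<in> C"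
    and g: "(\<gamma> \<longlongrightarrow> \<gamma> t) (at t within Iv)"
  shows "((\<lambda>s. inner_normal C (\<gamma> s)) \<longlongrightarrow> inner_normal C (\<gamma> t)) (at t within Iv)"
proof (rule continuous_on_tendsto_compose[OF normal_cont[OF C] g])
  show "\<gamma> t \<in> C" using t \<gamma>C by blast
  show "\<forall>\<^sub>F x in at t within Iv. \<gamma> x \<in> C" using \<gamma>C by (auto simp: eventually_at_filter)
qed

lemma tangency:
  assumes C: "smooth_convex_curve C" and t: "t \<in> Iv" and \<gamma>C: "\<forall>s\<in>Iv. \<gamma> s \<in> C"
    and D: "(\<gamma> has_vector_derivative D) (at t within Iv)"
  shows "D \<bullet> inner_normal C (\<gamma> t) = 0"
proof -
  define N where "N s = inner_normal C (\<gamma> s)" for s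
  define q where "q s = (1 / (s - t)) *\<^sub>R (\<gamma> s - \<gamma> t)" for s
  have g: "(\<gamma> \<longlongrightarrow> \<gamma> t) (at t within Iv)"
    using has_vector_derivative_continuous[OF D] by (simp add: continuous_within)
  have Nl: "(N \<longlongrightarrow> N t) (at t within Iv)" unfolding N_def by (rule comp_cont[OF C t \<gamma>C g])
  have ql: "(q \<longlongrightarrow> D) (at t within Iv)" unfolding q_def by (rule diffquot[OF D])
  have lim: "((\<lambda>s. (q s \<bullet> N t) * (q s \<bullet> N s)) \<longlongrightarrow> (D \<bullet> N t) * (D \<bullet> N t)) (at t within Iv)"
    by (intro tendsto_intros ql Nl)
  have ev: "\<forall>\<^sub>F s in at t within Iv. (q s \<bullet> N t) * (q s \<bullet> N s) \<le> 0"
    unfolding eventually_at_filter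
  proof (rule always_eventually, intro allI impI)
    fix s assume s: "s \<noteq> t" "s \<in> Iv"
    have X: "0 \<le> (\<gamma> s - \<gamma> t) \<bullet> N t" unfolding N_def
      using normal_prop(2)[OF C, of "\<gamma> t" "\<gamma> s"] \<gamma>C s t scc_basic(5)[OF C] by auto
    have Y: "0 \<le> (\<gamma> t - \<gamma> s) \<bullet> N s" unfolding N_def
      using normal_prop(2)[OF C, of "\<gamma> s" "\<gamma> t"] \<gamma>C s t scc_basic(5)[OF C] by auto
    have "(q s \<bullet> N t) * (q s \<bullet> N s) = ((1 / (s - t)) * (1 / (s - t))) * (((\<gamma> s - \<gamma> t) \<bullet> N t) * (- ((\<gamma> t - \<gamma> s) \<bullet> N s)))"
      unfolding q_def by (simp add: inner_diff_left algebra_simps)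
    also have "\<dots> \<le> 0" using X Y by (intro mult_nonneg_nonpos) (auto simp: mult_nonneg_nonpos)
    finally show "(q s \<bullet> N t) * (q s \<bullet> N s) \<le> 0" .
  qed
  have "(D \<bullet> N t) * (D \<bullet> N t) \<le> 0"
    using tendsto_upperbound[OF lim ev] Iv_nontriv[OF t] by simp
  hence "D \<bullet> N t = 0" by (metis mult_le_0_iff order_antisym_conv not_sum_squares_lt_zero add_cancel_right_left mult_eq_0_iff)
  thus ?thesis unfolding N_def .
qed

lemma monotone_normal:
  assumes C: "smooth_convex_curve C" and t: "t \<in> Iv" and \<gamma>C: "\<forall>s\<in>Iv. \<gamma> s \<in> C"
    and D: "(\<gamma> has_vector_derivative D) (at t within Iv)"
    and E: "((\<lambda>s. inner_normal C (\<gamma> s)) has_vector_derivative E) (at t within Iv)"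
  shows "D \<bullet> E \<le> 0"
proof -
  define N where "N s = inner_normal C (\<gamma> s)" for s
  have lim: "((\<lambda>y. ((1 / (y - t)) *\<^sub>R (\<gamma> y - \<gamma> t)) \<bullet> ((1 / (y - t)) *\<^sub>R (N y - N t))) \<longlongrightarrow> D \<bullet> E) (at t within Iv)"
    using dq_inner[OF D E] unfolding N_def .
  have ev: "\<forall>\<^sub>F s in at t within Iv. ((1 / (s - t)) *\<^sub>R (\<gamma> s - \<gamma> t)) \<bullet> ((1 / (s - t)) *\<^sub>R (N s - N t)) \<le> 0"
    unfolding eventually_at_filter
  proof (rule always_eventually, intro allI impI)
    fix s assume s: "s \<noteq> t" "s \<in> Iv"
    have X: "0 \<le> (\<gamma> s - \<gamma> t) \<bullet> N t" unfolding N_def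
      using normal_prop(2)[OF C, of "\<gamma> t" "\<gamma> s"] \<gamma>C s t scc_basic(5)[OF C] by auto
    have Y: "0 \<le> (\<gamma> t - \<gamma> s) \<bullet> N s" unfolding N_def
      using normal_prop(2)[OF C, of "\<gamma> s" "\<gamma> t"] \<gamma>C s t scc_basic(5)[OF C] by auto
    have "((1 / (s - t)) *\<^sub>R (\<gamma> s - \<gamma> t)) \<bullet> ((1 / (s - t)) *\<^sub>R (N s - N t))
       = ((1 / (s - t)) * (1 / (s - t))) * ((\<gamma> s - \<gamma> t) \<bullet> (N s - N t))"
      by simp
    also have "(\<gamma> s - \<gamma> t) \<bullet> (N s - N t) = - ((\<gamma> t - \<gamma> s) \<bullet> N s) - (\<gamma> s - \<gamma> t) \<bullet> N t"
      by (simp add: inner_diff_left inner_diff_right)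
    also have "((1 / (s - t)) * (1 / (s - t))) * (- ((\<gamma> t - \<gamma> s) \<bullet> N s) - (\<gamma> s - \<gamma> t) \<bullet> N t) \<le> 0"
      using X Y by (intro mult_nonneg_nonpos) auto
    finally show "((1 / (s - t)) *\<^sub>R (\<gamma> s - \<gamma> t)) \<bullet> ((1 / (s - t)) *\<^sub>R (N s - N t)) \<le> 0" .
  qed
  show ?thesis using tendsto_upperbound[OF lim ev] Iv_nontriv[OF t] by simp
qed

definition rot :: "real^2 \<Rightarrow> real^2" where
  "rot v = (\<chi> i. if i = 1 then - (v$2) else v$1)"

lemma rot_nth [simp]: "rot v $ 1 = - (v$2)" "rot v $ 2 = v$1"
  by (simp_all add: rot_def)

lemma rot_inner_self [simp]: "rot u \<bullet> u = 0" "u \<bullet> rot u = 0"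
  by (simp_all add: inner2)

lemma rot_rot_inner [simp]: "rot u \<bullet> rot u = u \<bullet> u"
  by (simp add: inner2)

lemma decomp:
  assumes "u \<bullet> u = 1"
  shows "x = (x \<bullet> u) *\<^sub>R u + (x \<bullet> rot u) *\<^sub>R rot u"
proof -
  have h: "u$1 * u$1 + u$2 * u$2 = 1" using assms by (simp add: inner2)
  show ?thesis unfolding vec2_eq inner2 using h
    by simp algebra
qed

lemma seg_line:
  "(1 - \<tau>) *\<^sub>R (p + a *\<^sub>R u) + \<tau> *\<^sub>R (p + b *\<^sub>R u) = p + ((1 - \<tau>) * a + \<tau> * b) *\<^sub>R (u::real^2)"
  by (simp add: algebra_simps)

lemma normal_unit:
  assumes "smooth_convex_curve C" "p \<in> C"
  shows "inner_normal C p \<bullet> inner_normal C p = 1"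
  using normal_prop(1)[OF assms] by (simp add: norm_eq_1)

lemma ray_interior:
  assumes C: "smooth_convex_curve C" and p: "p \<in> C" and u: "u = inner_normal C p"
  shows "\<exists>r0>0. p + r0 *\<^sub>R u \<in> interior (convex hull C)"
proof (rule ccontr)
  let ?H = "convex hull C"
  assume nr: "\<not> (\<exists>r0>0. p + r0 *\<^sub>R u \<in> interior ?H)"
  have uu: "u \<bullet> u = 1" using normal_unit[OF C p] u by simp
  have nu: "is_inner_normal C p u" using normal_ex[OF C p] u by simp
  have key: "(z - p) \<bullet> rot u \<noteq> 0" if z: "z \<in> interior ?H" for z
  proof
    assume z0: "(z - p) \<bullet> rot u = 0"
    have "z - p = ((z - p) \<bullet> u) *\<^sub>R u" using decomp[OF uu, of "z - p"] z0 by simp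
    hence "z = p + ((z - p) \<bullet> u) *\<^sub>R u" by (simp add: algebra_simps)
    moreover have "(z - p) \<bullet> u > 0" by (rule int_pos[OF nu z])
    ultimately show False using nr z by metis
  qed
  obtain c where c: "c \<in> interior ?H" using scc_basic(3)[OF C] by blast
  define w where "w = (if (c - p) \<bullet> rot u > 0 then rot u else - rot u)"
  have cw: "(c - p) \<bullet> w > 0" using key[OF c] unfolding w_def by auto
  have wu: "w \<bullet> u = 0" "w \<bullet> w = 1" using uu unfolding w_def by auto
  have allpos: "(x - p) \<bullet> w > 0" if x: "x \<in> interior ?H" for x
  proof (rule ccontr)
    assume "\<not> (x - p) \<bullet> w > 0"
    hence b: "(x - p) \<bullet> w \<le> 0" by simp
    define a where "a = (c - p) \<bullet> w"
    define b where "b = (x - p) \<bullet> w"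
    define \<tau> where "\<tau> = a / (a - b)"
    have ab: "a > 0" "b \<le> 0" using cw b unfolding a_def b_def by auto
    have \<tau>: "0 \<le> \<tau>" "\<tau> \<le> 1" using ab unfolding \<tau>_def by (auto simp: divide_simps)
    define z where "z = (1 - \<tau>) *\<^sub>R c + \<tau> *\<^sub>R x"
    have zi: "z \<in> interior ?H" unfolding z_def
      using convexD_alt[OF convex_interior[OF scc_basic(2)[OF C]] c x \<tau>] by simp
    have "(z - p) \<bullet> w = (1 - \<tau>) * a + \<tau> * b"
    proof -
      have "z - p = (1 - \<tau>) *\<^sub>R (c - p) + \<tau> *\<^sub>R (x - p)" unfolding z_def by (simp add: algebra_simps)
      thus ?thesis unfolding a_def b_def by (simp add: inner_add_left)
    qed
    also have "\<dots> = 0" using ab unfolding \<tau>_def by (simp add: field_simps)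
    finally have "(z - p) \<bullet> w = 0" .
    hence "(z - p) \<bullet> rot u = 0" unfolding w_def by (auto split: if_splits)
    thus False using key[OF zi] by simp
  qed
  have "interior ?H \<subseteq> {x. 0 \<le> (x - p) \<bullet> w}" using allpos by (auto simp: less_imp_le)
  hence "closure (interior ?H) \<subseteq> {x. 0 \<le> (x - p) \<bullet> w}"
    by (intro closure_minimal) (auto intro!: closed_Collect_le continuous_intros)
  hence "?H \<subseteq> {x. 0 \<le> (x - p) \<bullet> w}"
    using convex_closure_interior[OF scc_basic(2,3)[OF C]] closure_closed[OF scc_basic(6)[OF C]] by simp
  hence "is_inner_normal C p w" unfolding is_inner_normal_def using wu by (auto simp: norm_eq_1)
  hence "w = u" using normal_uniq[OF C p] u by simp
  thus False using wu uu by simp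
qed

lemma aff: "(1 - x) * a + x * b = a + x * (b - (a::real))"
  by (simp add: algebra_simps)

lemma ray:
  assumes C: "smooth_convex_curve C" and p: "p \<in> C" and u: "u = inner_normal C p"
  shows "\<exists>l>0. p + l *\<^sub>R u \<in> C \<and> (\<forall>r>0. p + r *\<^sub>R u \<in> convex hull C \<longleftrightarrow> r \<le> l)
              \<and> (\<forall>r. p + r *\<^sub>R u \<in> C \<longleftrightarrow> r = 0 \<or> r = l)"
proof -
  let ?H = "convex hull C"
  have uu: "u \<bullet> u = 1" using normal_unit[OF C p] u by simp
  have u0: "u \<noteq> 0" using uu by auto
  have nu: "is_inner_normal C p u" using normal_ex[OF C p] u by simp
  have Hc: "closure ?H = ?H" using scc_basic(6)[OF C] by simp
  have fr: "frontier ?H = C" using scc_basic(4)[OF C] by simp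
  have pH: "p \<in> ?H" using p scc_basic(5)[OF C] by auto
  obtain r0 where r0: "r0 > 0" "p + r0 *\<^sub>R u \<in> interior ?H" using ray_interior[OF C p u] by blast
  have inter: "p + r' *\<^sub>R u \<in> interior ?H" if r: "0 < r'" "r' < r" "p + r *\<^sub>R u \<in> ?H" for r r'
  proof -
    consider "r' < r0" | "r' = r0" | "r' > r0" by linarith
    thus ?thesis
    proof cases
      case 1
      have "p + r' *\<^sub>R u \<in> open_segment (p + r0 *\<^sub>R u) (p + 0 *\<^sub>R u)"
        unfolding in_segment(2) seg_line
      proof (intro conjI exI)
        show "p + r0 *\<^sub>R u \<noteq> p + 0 *\<^sub>R u" using r0 u0 by simp
        show "0 < 1 - r' / r0" "1 - r' / r0 < 1" using 1 r r0 by (auto simp: field_simps)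
        show "p + r' *\<^sub>R u = p + ((1 - (1 - r' / r0)) * r0 + (1 - r' / r0) * 0) *\<^sub>R u"
          using r0 by simp
      qed
      moreover have "open_segment (p + r0 *\<^sub>R u) (p + 0 *\<^sub>R u) \<subseteq> interior ?H"
        using in_interior_closure_convex_segment[OF scc_basic(2)[OF C] r0(2)] pH Hc by simp
      ultimately show ?thesis by blast
    next
      case 2 thus ?thesis using r0 by simp
    next
      case 3
      have "p + r' *\<^sub>R u \<in> open_segment (p + r0 *\<^sub>R u) (p + r *\<^sub>R u)"
        unfolding in_segment(2) seg_line
      proof (intro conjI exI)
        show "p + r0 *\<^sub>R u \<noteq> p + r *\<^sub>R u" using r 3 u0 by simp
        show "0 < (r' - r0) / (r - r0)" "(r' - r0) / (r - r0) < 1" using 3 r by (auto simp: field_simps)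
        show "p + r' *\<^sub>R u = p + ((1 - (r' - r0) / (r - r0)) * r0 + (r' - r0) / (r - r0) * r) *\<^sub>R u"
        proof -
          have "(1 - (r' - r0) / (r - r0)) * r0 + (r' - r0) / (r - r0) * r = r'"
          proof -
            have "r - r0 \<noteq> 0" using 3 r by simp
            hence e: "(r' - r0) / (r - r0) * (r - r0) = r' - r0" by simp
            have "(1 - (r' - r0) / (r - r0)) * r0 + (r' - r0) / (r - r0) * r
                  = r0 + (r' - r0) / (r - r0) * (r - r0)"
              using aff[of "(r' - r0) / (r - r0)" r0 r] .
            thus ?thesis using e by simp
          qed
          thus ?thesis by simp
        qed
      qed
      moreover have "open_segment (p + r0 *\<^sub>R u) (p + r *\<^sub>R u) \<subseteq> interior ?H"
        using in_interior_closure_convex_segment[OF scc_basic(2)[OF C] r0(2)] r Hc by simp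
      ultimately show ?thesis by blast
    qed
  qed
  obtain B where B: "\<And>x. x \<in> ?H \<Longrightarrow> norm x \<le> B" using scc_basic(7)[OF C] bounded_iff by blast
  define M where "M = r0 + \<bar>B\<bar> + norm p + 1"
  have nM: "p + M *\<^sub>R u \<notin> ?H"
  proof
    assume "p + M *\<^sub>R u \<in> ?H"
    hence "norm (p + M *\<^sub>R u) \<le> B" by (rule B)
    moreover have "norm (M *\<^sub>R u) \<le> norm (p + M *\<^sub>R u) + norm p" by (metis add_diff_cancel_left' norm_triangle_ineq4 add.commute)
    moreover have "norm (M *\<^sub>R u) = M" using uu r0 unfolding M_def by (simp add: norm_eq_1[symmetric])
    ultimately show False unfolding M_def using r0 abs_ge_self[of B] by linarith
  qed
  let ?S = "closed_segment (p + r0 *\<^sub>R u) (p + M *\<^sub>R u)"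
  have "?S \<inter> frontier ?H \<noteq> {}"
  proof (rule connected_Int_frontier)
    show "connected ?S" by simp
    show "?S \<inter> ?H \<noteq> {}" using r0(2) interior_subset by fastforce
    show "?S - ?H \<noteq> {}" using nM by fastforce
  qed
  then obtain q where q: "q \<in> ?S" "q \<in> C" using fr by blast
  then obtain \<tau> where \<tau>: "0 \<le> \<tau>" "\<tau> \<le> 1" "q = p + ((1 - \<tau>) * r0 + \<tau> * M) *\<^sub>R u"
    unfolding in_segment(1) seg_line by blast
  define l where "l = (1 - \<tau>) * r0 + \<tau> * M"
  have "r0 \<le> l"
  proof -
    have "l = r0 + \<tau> * (M - r0)" unfolding l_def by (rule aff)
    moreover have "M - r0 \<ge> 0" unfolding M_def by simp
    ultimately show ?thesis using \<tau> by simp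
  qed
  hence l0: "l > 0" using r0 by simp
  have lC: "p + l *\<^sub>R u \<in> C" using q \<tau> l_def by simp
  have notint: "x \<in> C \<Longrightarrow> x \<notin> interior ?H" for x using fr by (auto simp: frontier_def)
  have CH: "x \<in> C \<Longrightarrow> x \<in> ?H" for x using scc_basic(5)[OF C] by auto
  have P2: "\<forall>r>0. p + r *\<^sub>R u \<in> ?H \<longleftrightarrow> r \<le> l"
  proof (intro allI impI iffI)
    fix r assume r: "r > 0" "p + r *\<^sub>R u \<in> ?H"
    show "r \<le> l"
    proof (rule ccontr)
      assume "\<not> r \<le> l"
      hence "p + l *\<^sub>R u \<in> interior ?H" using inter[of l r] l0 r by simp
      thus False using notint[OF lC] by simp
    qed
  next
    fix r assume r: "r > 0" "r \<le> l"
    show "p + r *\<^sub>R u \<in> ?H"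
    proof (cases "r = l")
      case True thus ?thesis using CH[OF lC] by simp
    next
      case False thus ?thesis using inter[of r l] r CH[OF lC] interior_subset by fastforce
    qed
  qed
  have P3: "\<forall>r. p + r *\<^sub>R u \<in> C \<longleftrightarrow> r = 0 \<or> r = l"
  proof (intro allI iffI)
    fix r assume r: "p + r *\<^sub>R u \<in> C"
    consider "r < 0" | "r = 0" | "r > 0" by linarith
    thus "r = 0 \<or> r = l"
    proof cases
      case 1
      have "0 \<le> (p + r *\<^sub>R u - p) \<bullet> u" using nu CH[OF r] unfolding is_inner_normal_def by blast
      thus ?thesis using 1 uu by simp
    next
      case 3
      have "r \<le> l" using P2 CH[OF r] 3 by blast
      moreover have "\<not> r < l" using inter[of r l] 3 CH[OF lC] notint[OF r] by blast
      ultimately show ?thesis by simp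
    qed simp
  next
    fix r assume "r = 0 \<or> r = l"
    thus "p + r *\<^sub>R u \<in> C" using p lC by auto
  qed
  show ?thesis using l0 lC P2 P3 by blast
qed

lemma hmap_eq:
  assumes "u = inner_normal C p" "\<forall>r. p + r *\<^sub>R u \<in> C \<longleftrightarrow> r = 0 \<or> r = l" "l \<noteq> 0" "u \<noteq> 0"
  shows "hmap C p = p + l *\<^sub>R u"
  unfolding hmap_def
proof (rule the_equality)
  show "p + l *\<^sub>R u \<in> C \<and> p + l *\<^sub>R u \<noteq> p \<and> (\<exists>s. p + l *\<^sub>R u = p + s *\<^sub>R inner_normal C p)"
    using assms by auto
  fix q assume q: "q \<in> C \<and> q \<noteq> p \<and> (\<exists>s. q = p + s *\<^sub>R inner_normal C p)"
  then obtain r where r: "q = p + r *\<^sub>R u" using assms(1) by blast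
  hence "r = 0 \<or> r = l" using q assms(2) by blast
  thus "q = p + l *\<^sub>R u" using q r by auto
qed

lemma rot_perp:
  assumes "u \<bullet> u = 1" "v \<bullet> u = 0"
  shows "v = (- det2 v u) *\<^sub>R rot u"
proof -
  have h: "u$1 * u$1 + u$2 * u$2 = 1" "v$1 * u$1 + v$2 * u$2 = 0" using assms by (auto simp: inner2)
  show ?thesis unfolding vec2_eq det2_def using h by simp algebra
qed

lemma det2_perp:
  assumes "u \<bullet> u = 1" "v \<bullet> u = 0"
  shows "det2 v x = (x \<bullet> u) * det2 v u"
proof -
  have h: "u$1 * u$1 + u$2 * u$2 = 1" "v$1 * u$1 + v$2 * u$2 = 0" using assms by (auto simp: inner2)
  show ?thesis unfolding det2_def inner2 using h by algebra
qed

lemma rot_rot [simp]: "rot (rot u) = - u"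
  by (simp add: vec2_eq)

lemma rot_scale [simp]: "rot (c *\<^sub>R u) = c *\<^sub>R rot u"
  by (simp add: vec2_eq)

lemma rot_minus [simp]: "rot (- u) = - rot u"
  by (simp add: vec2_eq)

lemma inner_rot_swap: "x \<bullet> rot y = - (y \<bullet> rot x)"
  by (simp add: inner2)

lemma det2_rot: "det2 x (rot y) = x \<bullet> y"
  by (simp add: det2_def inner2)

lemma det2_identity: "det2 v w * det2 v u = (v \<bullet> v) * (w \<bullet> u) - (v \<bullet> w) * (v \<bullet> u)"
  unfolding det2_def inner2 by algebra

lemma det2_add_left: "det2 (x + y) z = det2 x z + det2 y z"
  by (simp add: det2_def algebra_simps)

lemma det2_scale_left: "det2 (c *\<^sub>R x) z = c * det2 x z"
  by (simp add: det2_def algebra_simps)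

lemma det2_self [simp]: "det2 x x = 0"
  by (simp add: det2_def)

lemma det2_minus_left: "det2 (- x) z = - det2 x z"
  by (simp add: det2_def algebra_simps)

lemma det2_rot_left: "det2 (rot x) y = - (x \<bullet> y)"
  by (simp add: det2_def inner2)

lemma linear_rot: "linear rot"
  by (rule linearI) (simp_all add: vec2_eq)

lemma bounded_linear_rot: "bounded_linear rot"
  using linear_rot linear_conv_bounded_linear by blast

lemma norm_rot [simp]: "norm (rot u) = norm u"
  by (simp add: norm_eq_sqrt_inner)

lemma tendsto_det2 [tendsto_intros]:
  "(f \<longlongrightarrow> a) F \<Longrightarrow> (g \<longlongrightarrow> b) F \<Longrightarrow> ((\<lambda>x. det2 (f x) (g x)) \<longlongrightarrow> det2 a b) F"
  unfolding det2_def by (intro tendsto_intros)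

theorem lemmaD4:
  fixes C :: "(real^2) set" and \<alpha> \<beta> :: "real \<Rightarrow> real^2" and t :: real
  assumes C: "smooth_convex_curve C"
    and \<alpha>C: "\<forall>s\<in>Iv. \<alpha> s \<in> C"
    and \<alpha>diff: "\<forall>s\<in>Iv. \<alpha> differentiable (at s within Iv) \<and> dcurve \<alpha> s \<noteq> 0"
    and Tdiff: "\<forall>s\<in>Iv. unit_tangent \<alpha> differentiable (at s within Iv)
                         \<and> dcurve (unit_tangent \<alpha>) s \<noteq> 0"
    and ccw: "counterclockwise C \<alpha>"
    and \<beta>def: "\<forall>s\<in>Iv. \<beta> s = hmap C (\<alpha> s)"
    and t: "t \<in> Iv"
    and \<beta>diff: "\<beta> differentiable (at t within Iv)"
    and basis: "det2 (dcurve \<beta> t) (inner_normal C (\<beta> t)) \<noteq> 0"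
  shows "(\<exists>!q. q \<in> C - {\<alpha> t} \<and> q \<in> line_through (\<alpha> t) (center_curv \<alpha> t))
         \<and> \<beta> t \<in> C - {\<alpha> t} \<and> \<beta> t \<in> line_through (\<alpha> t) (center_curv \<alpha> t)
         \<and> (matching_orient C \<alpha> \<beta> t \<longleftrightarrow> center_curv \<alpha> t \<in> convex hull C)"
proof -
  let ?H = "convex hull C"
  define N where "N s = inner_normal C (\<alpha> s)" for s
  define T where "T = unit_tangent \<alpha>"
  have \<alpha>D: "(\<alpha> has_vector_derivative dcurve \<alpha> s) (at s within Iv)" if "s \<in> Iv" for s
    using \<alpha>diff that unfolding dcurve_def by (simp add: vector_derivative_works[symmetric])
  have Nu: "N s \<bullet> N s = 1" if "s \<in> Iv" for s
    unfolding N_def using normal_unit[OF C] \<alpha>C that by blast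
  have Nn: "norm (N s) = 1" if "s \<in> Iv" for s
    unfolding N_def using normal_prop(1)[OF C] \<alpha>C that by blast
  have tang: "dcurve \<alpha> s \<bullet> N s = 0" if "s \<in> Iv" for s
    unfolding N_def using tangency[OF C that \<alpha>C \<alpha>D[OF that]] .
  have detpos: "det2 (dcurve \<alpha> s) (N s) > 0" if s: "s \<in> Iv" for s
  proof -
    obtain c where c: "c \<in> interior ?H" using scc_basic(3)[OF C] by blast
    have "det2 (dcurve \<alpha> s) (c - \<alpha> s) > 0" using ccw c s unfolding counterclockwise_def by blast
    moreover have "det2 (dcurve \<alpha> s) (c - \<alpha> s) = ((c - \<alpha> s) \<bullet> N s) * det2 (dcurve \<alpha> s) (N s)"
      by (rule det2_perp[OF Nu[OF s] tang[OF s]])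
    moreover have "(c - \<alpha> s) \<bullet> N s > 0"
      unfolding N_def using int_pos[OF normal_ex[OF C] c] \<alpha>C s by blast
    ultimately show ?thesis by (simp add: zero_less_mult_iff)
  qed
  have Tform: "T s = - rot (N s)" if s: "s \<in> Iv" for s
  proof -
    define d where "d = det2 (dcurve \<alpha> s) (N s)"
    have v: "dcurve \<alpha> s = (- d) *\<^sub>R rot (N s)" unfolding d_def by (rule rot_perp[OF Nu[OF s] tang[OF s]])
    have d0: "d > 0" unfolding d_def by (rule detpos[OF s])
    have nv: "norm (dcurve \<alpha> s) = d" using v d0 Nn[OF s] by simp
    show ?thesis unfolding T_def unit_tangent_def nv using d0 by (subst v) simp
  qed
  have Nrot: "N s = rot (T s)" if "s \<in> Iv" for s using Tform[OF that] by simp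
  define T' where "T' = dcurve T t"
  have TD: "(T has_vector_derivative T') (at t within Iv)"
    using Tdiff t unfolding T'_def dcurve_def T_def by (simp add: vector_derivative_works[symmetric])
  have T'0: "T' \<noteq> 0" using Tdiff t unfolding T'_def T_def by blast
  have ND: "(N has_vector_derivative rot T') (at t within Iv)"
  proof (rule has_vector_derivative_transform_within[OF _ zero_less_one t])
    show "((\<lambda>s. rot (T s)) has_vector_derivative rot T') (at t within Iv)"
      by (rule bounded_linear.has_vector_derivative[OF bounded_linear_rot TD])
    show "\<And>x'. x' \<in> Iv \<Longrightarrow> dist x' t < 1 \<Longrightarrow> rot (T x') = N x'" using Nrot by simp
  qed
  have Tcont: "(T \<longlongrightarrow> T t) (at t within Iv)"
    using has_vector_derivative_continuous[OF TD] by (simp add: continuous_within)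
  have Tperp: "T t \<bullet> T' = 0"
  proof -
    have lim: "((\<lambda>s. ((1 / (s - t)) *\<^sub>R (T s - T t)) \<bullet> (T s + T t)) \<longlongrightarrow> T' \<bullet> (T t + T t)) (at t within Iv)"
      by (intro tendsto_intros diffquot TD Tcont)
    have TT: "T s \<bullet> T s = 1" if "s \<in> Iv" for s
      using Tform[OF that] Nu[OF that] by simp
    have "\<forall>\<^sub>F s in at t within Iv. ((1 / (s - t)) *\<^sub>R (T s - T t)) \<bullet> (T s + T t) = 0"
      unfolding eventually_at_filter
    proof (rule always_eventually, intro allI impI)
      fix s assume s: "s \<noteq> t" "s \<in> Iv"
      have "(T s - T t) \<bullet> (T s + T t) = T s \<bullet> T s - T t \<bullet> T t"
        by (simp add: inner_diff_left inner_diff_right inner_add_right inner_add_left inner_commute)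
      thus "((1 / (s - t)) *\<^sub>R (T s - T t)) \<bullet> (T s + T t) = 0" using TT[OF s(2)] TT[OF t] by simp
    qed
    hence "((\<lambda>s. ((1 / (s - t)) *\<^sub>R (T s - T t)) \<bullet> (T s + T t)) \<longlongrightarrow> 0) (at t within Iv)"
      by (rule tendsto_eventually)
    hence "T' \<bullet> (T t + T t) = 0" using tendsto_unique[OF Iv_nontriv[OF t] lim] by blast
    hence "T' \<bullet> T t + T' \<bullet> T t = 0" by (simp only: inner_add_right)
    thus ?thesis by (simp add: inner_commute)
  qed
  have mono: "dcurve \<alpha> t \<bullet> rot T' \<le> 0"
    using monotone_normal[OF C t \<alpha>C \<alpha>D[OF t]] ND unfolding N_def by blast
  define u where "u = N t"
  define m where "m = norm (dcurve \<alpha> t)"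
  have m0: "m > 0" using \<alpha>diff t unfolding m_def by simp
  have a'T: "dcurve \<alpha> t = m *\<^sub>R T t" using m0 unfolding m_def T_def unit_tangent_def by simp
  have uT: "u = rot (T t)" "T t = - rot u" unfolding u_def using Nrot[OF t] Tform[OF t] by simp_all
  have uu: "u \<bullet> u = 1" unfolding u_def by (rule Nu[OF t])
  define d where "d = T' \<bullet> u"
  have dge: "d \<ge> 0"
  proof -
    have "dcurve \<alpha> t \<bullet> rot T' = m * (T t \<bullet> rot T')" using a'T by simp
    hence "T t \<bullet> rot T' \<le> 0" using mono m0 by (simp add: mult_le_0_iff)
    thus ?thesis unfolding d_def uT(1) using inner_rot_swap[of "T t" T'] by simp
  qed
  have T'u: "T' = d *\<^sub>R u"
  proof -
    have "T' = (T' \<bullet> u) *\<^sub>R u + (T' \<bullet> rot u) *\<^sub>R rot u" by (rule decomp[OF uu])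
    moreover have "T' \<bullet> rot u = 0" using Tperp uT(2) by (simp add: inner_commute)
    ultimately show ?thesis unfolding d_def by simp
  qed
  have d0: "d > 0" using dge T'0 T'u by (cases "d = 0") auto
  have un: "norm u = 1" unfolding u_def by (rule Nn[OF t])
  have nT': "norm T' = d" using T'u un d0 by simp
  have cn: "curve_normal \<alpha> t = u"
    unfolding curve_normal_def T_def[symmetric] T'_def[symmetric] nT' using d0 T'u by simp
  have curv: "curvature \<alpha> t = d / m"
    unfolding curvature_def T_def[symmetric] T'_def[symmetric] nT' m_def ..
  define \<rho> where "\<rho> = m / d"
  have \<rho>0: "\<rho> > 0" unfolding \<rho>_def using m0 d0 by simp
  have center: "center_curv \<alpha> t = \<alpha> t + \<rho> *\<^sub>R u"
    unfolding center_curv_def curv cn \<rho>_def by simp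
  have line: "x \<in> line_through (\<alpha> t) (center_curv \<alpha> t) \<longleftrightarrow> (\<exists>r. x = \<alpha> t + r *\<^sub>R u)" for x
  proof
    assume "x \<in> line_through (\<alpha> t) (center_curv \<alpha> t)"
    then obtain s where "x = \<alpha> t + s *\<^sub>R (\<rho> *\<^sub>R u)" unfolding line_through_def center by auto
    thus "\<exists>r. x = \<alpha> t + r *\<^sub>R u" by auto
  next
    assume "\<exists>r. x = \<alpha> t + r *\<^sub>R u"
    then obtain r where "x = \<alpha> t + r *\<^sub>R u" by blast
    hence "x = \<alpha> t + (r / \<rho>) *\<^sub>R (center_curv \<alpha> t - \<alpha> t)" unfolding center using \<rho>0 by simp
    thus "x \<in> line_through (\<alpha> t) (center_curv \<alpha> t)" unfolding line_through_def by blast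
  qed

  have p: "\<alpha> t \<in> C" using \<alpha>C t by blast
  have u0: "u \<noteq> 0" using uu by auto
  obtain l where l: "l > 0" "\<alpha> t + l *\<^sub>R u \<in> C" "\<forall>r>0. \<alpha> t + r *\<^sub>R u \<in> ?H \<longleftrightarrow> r \<le> l"
      "\<forall>r. \<alpha> t + r *\<^sub>R u \<in> C \<longleftrightarrow> r = 0 \<or> r = l"
    using ray[OF C p u_def[unfolded N_def]] by blast
  have \<beta>t: "\<beta> t = \<alpha> t + l *\<^sub>R u"
    using \<beta>def t hmap_eq[OF u_def[unfolded N_def] l(4)] l(1) u0 by simp
  have part1: "\<exists>!q. q \<in> C - {\<alpha> t} \<and> q \<in> line_through (\<alpha> t) (center_curv \<alpha> t)"
  proof (rule ex1I[of _ "\<alpha> t + l *\<^sub>R u"])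
    show "\<alpha> t + l *\<^sub>R u \<in> C - {\<alpha> t} \<and> \<alpha> t + l *\<^sub>R u \<in> line_through (\<alpha> t) (center_curv \<alpha> t)"
      using l u0 line by auto
    fix q assume q: "q \<in> C - {\<alpha> t} \<and> q \<in> line_through (\<alpha> t) (center_curv \<alpha> t)"
    then obtain r where r: "q = \<alpha> t + r *\<^sub>R u" using line by blast
    hence "r = 0 \<or> r = l" using q l(4) by blast
    thus "q = \<alpha> t + l *\<^sub>R u" using q r by auto
  qed
  have part2: "\<beta> t \<in> C - {\<alpha> t} \<and> \<beta> t \<in> line_through (\<alpha> t) (center_curv \<alpha> t)"
    using \<beta>t l u0 line by auto
  define lam where "lam s = (\<beta> s - \<alpha> s) \<bullet> N s" for s
  have \<beta>s: "\<beta> s \<in> C \<and> \<beta> s = \<alpha> s + lam s *\<^sub>R N s" if s: "s \<in> Iv" for s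
  proof -
    have ps: "\<alpha> s \<in> C" using \<alpha>C s by blast
    obtain ls where ls: "ls > 0" "\<alpha> s + ls *\<^sub>R N s \<in> C" "\<forall>r. \<alpha> s + r *\<^sub>R N s \<in> C \<longleftrightarrow> r = 0 \<or> r = ls"
      using ray[OF C ps, of "N s"] unfolding N_def by blast
    have N0: "N s \<noteq> 0" using Nu[OF s] by auto
    have e: "\<beta> s = \<alpha> s + ls *\<^sub>R N s"
      using \<beta>def s hmap_eq[OF _ ls(3)] ls(1) N0 unfolding N_def by simp
    have "lam s = ls" unfolding lam_def e using Nu[OF s] by simp
    thus ?thesis using e ls by simp
  qed
  have \<beta>C: "\<forall>s\<in>Iv. \<beta> s \<in> C" using \<beta>s by blast
  define v where "v = dcurve \<beta> t"
  have \<beta>D: "(\<beta> has_vector_derivative v) (at t within Iv)"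
    using \<beta>diff unfolding v_def dcurve_def by (simp add: vector_derivative_works[symmetric])
  define w where "w = inner_normal C (\<beta> t)"
  have vw: "v \<bullet> w = 0" unfolding w_def by (rule tangency[OF C t \<beta>C \<beta>D])
  have \<beta>tC: "\<beta> t \<in> C" using \<beta>C t by blast
  have wn: "is_inner_normal C (\<beta> t) w" unfolding w_def by (rule normal_ex[OF C \<beta>tC])
  have wu: "w \<bullet> u < 0"
  proof -
    have "0 \<le> (\<alpha> t - \<beta> t) \<bullet> w" using wn p scc_basic(5)[OF C] unfolding is_inner_normal_def by blast
    hence le: "0 \<le> - l * (u \<bullet> w)" unfolding \<beta>t by simp
    hence "u \<bullet> w \<le> 0" using l(1) by (simp add: mult_le_0_iff)
    moreover have "u \<bullet> w \<noteq> 0"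
    proof
      assume uw: "u \<bullet> w = 0"
      have "is_inner_normal C (\<alpha> t) w"
        unfolding is_inner_normal_def
      proof (intro conjI ballI)
        show "norm w = 1" using wn unfolding is_inner_normal_def by blast
        fix x assume x: "x \<in> ?H"
        have "(x - \<alpha> t) \<bullet> w = (x - \<beta> t) \<bullet> w + l * (u \<bullet> w)" unfolding \<beta>t
          by (simp add: inner_diff_left inner_add_left)
        thus "0 \<le> (x - \<alpha> t) \<bullet> w" using uw wn x unfolding is_inner_normal_def by simp
      qed
      hence "w = u" using normal_uniq[OF C p] u_def unfolding N_def by simp
      thus False using uw uu by simp
    qed
    ultimately show ?thesis by (simp add: inner_commute)
  qed
  have \<alpha>cont: "(\<alpha> \<longlongrightarrow> \<alpha> t) (at t within Iv)"
    using has_vector_derivative_continuous[OF \<alpha>D[OF t]] by (simp add: continuous_within)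
  have \<beta>cont: "(\<beta> \<longlongrightarrow> \<beta> t) (at t within Iv)"
    using has_vector_derivative_continuous[OF \<beta>D] by (simp add: continuous_within)
  have Ncont: "(N \<longlongrightarrow> N t) (at t within Iv)"
    using has_vector_derivative_continuous[OF ND] by (simp add: continuous_within)
  have lamt: "lam t = l" unfolding lam_def \<beta>t u_def[symmetric] using uu by simp
  have lamcont: "(lam \<longlongrightarrow> l) (at t within Iv)"
    unfolding lamt[symmetric] lam_def by (intro tendsto_intros \<alpha>cont \<beta>cont Ncont)
  have lim1: "((\<lambda>s. det2 ((1 / (s - t)) *\<^sub>R (\<beta> s - \<beta> t)) u) \<longlongrightarrow> det2 v u) (at t within Iv)"
    by (intro tendsto_intros diffquot \<beta>D)
  have lim2: "((\<lambda>s. det2 ((1 / (s - t)) *\<^sub>R (\<alpha> s - \<alpha> t)) u + lam s * det2 ((1 / (s - t)) *\<^sub>R (N s - N t)) u)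
      \<longlongrightarrow> det2 (dcurve \<alpha> t) u + l * det2 (rot T') u) (at t within Iv)"
    by (intro tendsto_intros diffquot \<alpha>D[OF t] ND lamcont)
  have ev: "\<forall>\<^sub>F s in at t within Iv. det2 ((1 / (s - t)) *\<^sub>R (\<alpha> s - \<alpha> t)) u + lam s * det2 ((1 / (s - t)) *\<^sub>R (N s - N t)) u
      = det2 ((1 / (s - t)) *\<^sub>R (\<beta> s - \<beta> t)) u"
    unfolding eventually_at_filter
  proof (rule always_eventually, intro allI impI)
    fix s assume s: "s \<noteq> t" "s \<in> Iv"
    have e: "\<beta> s - \<beta> t = (\<alpha> s - \<alpha> t) + lam s *\<^sub>R (N s - N t) + (lam s - lam t) *\<^sub>R u"
      using \<beta>s[OF s(2)] \<beta>s[OF t] unfolding u_def by (simp add: algebra_simps)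
    have "det2 (\<beta> s - \<beta> t) u = det2 (\<alpha> s - \<alpha> t) u + lam s * det2 (N s - N t) u"
      unfolding e det2_add_left det2_scale_left by simp
    thus "det2 ((1 / (s - t)) *\<^sub>R (\<alpha> s - \<alpha> t)) u + lam s * det2 ((1 / (s - t)) *\<^sub>R (N s - N t)) u
      = det2 ((1 / (s - t)) *\<^sub>R (\<beta> s - \<beta> t)) u"
      unfolding det2_scale_left by (simp add: algebra_simps)
  qed
  have "det2 v u = det2 (dcurve \<alpha> t) u + l * det2 (rot T') u"
    using tendsto_unique[OF Iv_nontriv[OF t] lim1 Lim_transform_eventually[OF lim2 ev]] by simp
  moreover have "det2 (dcurve \<alpha> t) u = m"
  proof -
    have TT: "T t \<bullet> T t = 1" using uu by (simp add: uT(2))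
    show ?thesis unfolding a'T uT(1) det2_scale_left det2_rot using TT by simp
  qed
  moreover have "det2 (rot T') u = - d"
    unfolding T'u by (simp add: det2_scale_left det2_rot_left uu)
  ultimately have A: "det2 v u = m - l * d" by simp
  have v0: "v \<noteq> 0" using basis unfolding v_def[symmetric] by (auto simp: det2_def)
  have vv: "v \<bullet> v > 0" using v0 by simp
  have prod: "det2 v w * det2 v u < 0"
    unfolding det2_identity vw using vv wu by (simp add: mult_pos_neg)
  have sgn\<alpha>: "sgn (det2 (dcurve \<alpha> t) (curve_normal \<alpha> t)) = 1"
    using detpos[OF t] unfolding cn u_def by simp
  have match: "matching_orient C \<alpha> \<beta> t \<longleftrightarrow> det2 v w > 0"
    unfolding matching_orient_def sgn\<alpha> v_def[symmetric] w_def[symmetric]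
    by (metis sgn_pos sgn_1_pos)
  have cH: "center_curv \<alpha> t \<in> ?H \<longleftrightarrow> \<rho> \<le> l" unfolding center using l(3) \<rho>0 by blast
  have "\<rho> \<le> l \<longleftrightarrow> m \<le> l * d" unfolding \<rho>_def using d0 by (simp add: divide_le_eq)
  hence part3: "matching_orient C \<alpha> \<beta> t \<longleftrightarrow> center_curv \<alpha> t \<in> ?H"
    unfolding match cH using prod A
    by (smt (verit) mult_pos_pos mult_nonpos_nonpos zero_less_mult_iff)
  show ?thesis using part1 part2 part3 by blast
qed

end
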